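(* Let $T\ge 1$ be an integer, $\Delta t>0$, $E_0\in\mathbb{R}$, $P_{\max}>0$, charging and discharging efficiencies $\eta_{c},\eta_{d}\in(0,1]$, and a net-charge efficiency $\eta\in[\eta_{c},\tfrac{1}{\eta_{d}}]$. Let $\mathbf{A}\in\mathbb{R}^{T\times T}$ be the lower triangular matrix with $\mathbf{A}_{lk}=\Delta t$ for $k\le l$ and $\mathbf{A}_{lk}=0$ for $k>l$, and let $\mathbf{1}_T=(1,\dots,1)^\top\in\mathbb{R}^T$. Let $\mathbf{P}_c,\mathbf{P}_d,\mathbf{P}^r_c,\mathbf{P}^r_d\in[0,P_{\max}]^T$ and $\mathbf{P}_b\in\mathbb{R}^T$ be such that $$\mathbf{P}_b=\mathbf{P}_c-\mathbf{P}_d=\mathbf{P}^r_c-\mathbf{P}^r_d,$$ with $\mathbf{P}_c\cdot\mathbf{P}_d=\mathbf{0}$ and $\mathbf{P}^r_c\cdot\mathbf{P}^r_d\ge\mathbf{0}$ (componentwise products). Define the SoC trajectories $$\mathbf{E}(\mathbf{P}_c,\mathbf{P}_d)=\mathbf{1}_TE_0+\eta_c\mathbf{A}\mathbf{P}_c-\tfrac{1}{\eta_d}\mathbf{A}\mathbf{P}_d,\qquad \mathbf{E}^r(\mathbf{P}^r_c,\mathbf{P}^r_d)=\mathbf{1}_TE_0+\eta_c\mathbf{A}\mathbf{P}^r_c-\tfrac{1}{\eta_d}\mathbf{A}\mathbf{P}^r_d,$$ $$\mathbf{E}^s(\mathbf{P}_b)=\mathbf{1}_TE_0+\eta\,\mathbf{A}\mathbf{P}_b.$$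 Then, componentwise, $$\mathbf{E}^r(\mathbf{P}^r_c,\mathbf{P}^r_d)\le\mathbf{E}(\mathbf{P}_c,\mathbf{P}_d)\le\mathbf{E}^s(\mathbf{P}_b).$$
   Context: This models a battery over time steps $k=0,\dots,T-1$ of duration $\Delta t$: $\mathbf{E}$ is the actual (standard-model) state-of-charge trajectory under charging input $\mathbf{P}_c$ and discharging input $\mathbf{P}_d$ that are never simultaneously nonzero; $\mathbf{E}^r$ is the trajectory of the relaxed model, in which simultaneous charging and discharging is allowed; $\mathbf{E}^s$ is the trajectory of the simplified one-input model driven by the net-charging input $\mathbf{P}_b$ with a single efficiency $\eta$. Vector inequalities and products are taken componentwise. *)

theory Defs
  imports Main "HOL.Real"
begin

text \<open>Vectors in R^T are modelled as functions nat => real, of which only indices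
  0..T-1 matter; T x T matrices as nat => nat => real.\<close>

definition Amat :: "real \<Rightarrow> nat \<Rightarrow> nat \<Rightarrow> real" where
  "Amat dt l k = (if k \<le> l then dt else 0)"

definition mulv :: "nat \<Rightarrow> (nat \<Rightarrow> nat \<Rightarrow> real) \<Rightarrow> (nat \<Rightarrow> real) \<Rightarrow> nat \<Rightarrow> real" where
  "mulv T M x l = (\<Sum>k<T. M l k * x k)"

definition E_std :: "nat \<Rightarrow> real \<Rightarrow> real \<Rightarrow> real \<Rightarrow> real \<Rightarrow> (nat \<Rightarrow> real) \<Rightarrow> (nat \<Rightarrow> real) \<Rightarrow> nat \<Rightarrow> real" where
  "E_std T dt E0 eta_c eta_d Pc Pd l =
     E0 + eta_c * mulv T (Amat dt) Pc l - (1 / eta_d) * mulv T (Amat dt) Pd l"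

definition E_simp :: "nat \<Rightarrow> real \<Rightarrow> real \<Rightarrow> real \<Rightarrow> (nat \<Rightarrow> real) \<Rightarrow> nat \<Rightarrow> real" where
  "E_simp T dt E0 eta Pb l = E0 + eta * mulv T (Amat dt) Pb l"

end

theory Submission
  imports Defs
begin

theorem lemma1:
  fixes T :: nat and dt E0 Pmax eta_c eta_d eta :: real
    and Pc Pd Prc Prd Pb :: "nat \<Rightarrow> real"
  assumes "T \<ge> 1" and "dt > 0" and "Pmax > 0"
    and "0 < eta_c" "eta_c \<le> 1" and "0 < eta_d" "eta_d \<le> 1"
    and "eta_c \<le> eta" "eta \<le> 1 / eta_d"
    and "\<forall>k<T. 0 \<le> Pc k \<and> Pc k \<le> Pmax"
    and "\<forall>k<T. 0 \<le> Pd k \<and> Pd k \<le> Pmax"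
    and "\<forall>k<T. 0 \<le> Prc k \<and> Prc k \<le> Pmax"
    and "\<forall>k<T. 0 \<le> Prd k \<and> Prd k \<le> Pmax"
    and "\<forall>k<T. Pb k = Pc k - Pd k \<and> Pb k = Prc k - Prd k"
    and "\<forall>k<T. Pc k * Pd k = 0"
    and "\<forall>k<T. Prc k * Prd k \<ge> 0"
  shows "\<forall>l<T. E_std T dt E0 eta_c eta_d Prc Prd l \<le> E_std T dt E0 eta_c eta_d Pc Pd l
              \<and> E_std T dt E0 eta_c eta_d Pc Pd l \<le> E_simp T dt E0 eta Pb l"
proof (intro allI impI conjI)
  fix l assume l: "l < T"
  have A0: "\<And>k. 0 \<le> Amat dt l k" using assms(2) by (simp add: Amat_def)
  have ed: "1 \<le> 1/eta_d" using assms(6,7) by simp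
  have key1: "eta_c * Prc k - (1/eta_d) * Prd k \<le> eta_c * Pc k - (1/eta_d) * Pd k" if k: "k < T" for k
  proof -
    have h: "0 \<le> Pc k" "0 \<le> Pd k" "0 \<le> Prc k" "0 \<le> Prd k" "Pc k - Pd k = Prc k - Prd k" "Pc k * Pd k = 0"
      using assms(10-15) k by auto
    have s: "Prc k - Pc k \<ge> 0" using h by (cases "Pc k = 0") auto
    have "eta_c * (Prc k - Pc k) \<le> (1/eta_d) * (Prc k - Pc k)"
      using s assms(5) ed by (intro mult_right_mono) auto
    moreover have "Prd k = Pd k + (Prc k - Pc k)" using h by linarith
    ultimately show ?thesis by (simp only:) (simp add: algebra_simps add_divide_distrib diff_divide_distrib)
  qed
  have key2: "eta_c * Pc k - (1/eta_d) * Pd k \<le> eta * Pb k" if k: "k < T" for k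
  proof -
    have h: "0 \<le> Pc k" "0 \<le> Pd k" "Pb k = Pc k - Pd k" "Pc k * Pd k = 0"
      using assms(10-15) k by auto
    show ?thesis
    proof (cases "Pc k = 0")
      case True
      have "eta * Pd k \<le> (1/eta_d) * Pd k" using h assms(9) by (intro mult_right_mono) auto
      then show ?thesis using True h by simp
    next
      case False
      hence "Pd k = 0" using h by simp
      moreover have "eta_c * Pc k \<le> eta * Pc k" using h assms(8) by (intro mult_right_mono) auto
      ultimately show ?thesis using h by simp
    qed
  qed
  have eq: "E_std T dt E0 eta_c eta_d X Y l = E0 + (\<Sum>k<T. Amat dt l k * (eta_c * X k - (1/eta_d) * Y k))" for X Y
    by (simp add: E_std_def mulv_def sum_distrib_left sum_subtractf algebra_simps)
  have eq2: "E_simp T dt E0 eta Pb l = E0 + (\<Sum>k<T. Amat dt l k * (eta * Pb k))"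
    by (simp add: E_simp_def mulv_def sum_distrib_left algebra_simps)
  show "E_std T dt E0 eta_c eta_d Prc Prd l \<le> E_std T dt E0 eta_c eta_d Pc Pd l"
    unfolding eq using key1 A0 by (auto intro!: sum_mono mult_left_mono)
  show "E_std T dt E0 eta_c eta_d Pc Pd l \<le> E_simp T dt E0 eta Pb l"
    unfolding eq eq2 using key2 A0 by (auto intro!: sum_mono mult_left_mono)
qed

end
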